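(* Let $\hat M,M^\star\in\mathbb R^{(n_1+n_2)\times(m_1+m_2)}$ be partitioned into blocks $\hat M_{ij},M^\star_{ij}\in\mathbb R^{n_i\times m_j}$, $i,j\in\{1,2\}$. Suppose $\operatorname{rank}\hat M\le p$, $\operatorname{rank}M^\star=p$, $\sigma_p(M^\star_{11})>0$, and for all $(i,j)\ne(2,2)$, $\|\hat M_{ij}-M^\star_{ij}\|_F\le\epsilon$ and $\|M^\star_{ij}\|_F\le M$, where $\epsilon\le\sigma_p(M^\star_{11})/2$. Then $$\|\hat M_{22}-M^\star_{22}\|_F\le 8\epsilon\frac{M^2}{\sigma_p(M^\star_{11})^2}.$$
   Context: $\|\cdot\|_F$ is the Frobenius norm and $\sigma_p(A)$ denotes the $p$-th largest singular value of a matrix $A$. *)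

theory Defs
  imports "Jordan_Normal_Form.Matrix" "Jordan_Normal_Form.DL_Rank" "Jordan_Normal_Form.Char_Poly"
    "HOL-Computational_Algebra.Polynomial" "HOL-Library.Multiset"
begin

definition frob_norm :: "real mat \<Rightarrow> real" where
  "frob_norm A = sqrt (\<Sum>i<dim_row A. \<Sum>j<dim_col A. (A $$ (i,j))^2)"

definition singular_values :: "real mat \<Rightarrow> real list" where
  "singular_values A =
     rev (sorted_list_of_multiset (image_mset sqrt (proots (char_poly (transpose_mat A * A)))))"

text \<open>sigma p A: the p-th largest singular value (1-indexed); 0 beyond the list.\<close>
definition sigma :: "nat \<Rightarrow> real mat \<Rightarrow> real" where
  "sigma p A = (if 1 \<le> p \<and> p \<le> length (singular_values A)
                then singular_values A ! (p - 1) else 0)"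

definition mat_rank :: "real mat \<Rightarrow> nat" where
  "mat_rank A = vec_space.rank (dim_row A) A"

end

theory Submission
  imports Defs "HOL-Analysis.L2_Norm"
begin
definition vnorm :: "real vec \<Rightarrow> real" where "vnorm v = sqrt (v \<bullet> v)"

lemma sprod_self_nonneg: "(v::real vec) \<bullet> v \<ge> 0"
  unfolding scalar_prod_def by (auto intro: sum_nonneg)

lemma vnorm_nonneg: "vnorm v \<ge> 0" unfolding vnorm_def using sprod_self_nonneg by simp

lemma vnorm_sq: "(vnorm v)^2 = v \<bullet> v" unfolding vnorm_def using sprod_self_nonneg by simp

lemma sprod_self_sum: "(v::real vec) \<bullet> v = (\<Sum>i<dim_vec v. (v$i)^2)"
  unfolding scalar_prod_def by (simp add: power2_eq_square atLeast0LessThan)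

lemma frob_norm_cols: assumes "A \<in> carrier_mat nr nc"
  shows "frob_norm A = sqrt (\<Sum>j<nc. (vnorm (col A j))^2)"
proof -
  have "(\<Sum>i<nr. \<Sum>j<nc. (A $$ (i,j))^2) = (\<Sum>j<nc. \<Sum>i<nr. (A $$ (i,j))^2)"
    by (rule sum.swap)
  also have "\<dots> = (\<Sum>j<nc. (vnorm (col A j))^2)"
    using assms by (auto simp: vnorm_sq sprod_self_sum intro!: sum.cong)
  finally show ?thesis unfolding frob_norm_def using assms by simp
qed

lemma frob_norm_nonneg: "frob_norm A \<ge> 0" unfolding frob_norm_def by (auto intro!: sum_nonneg)

lemma frob_norm_sq: "(frob_norm A)^2 = (\<Sum>i<dim_row A. \<Sum>j<dim_col A. (A $$ (i,j))^2)"
  unfolding frob_norm_def by (simp add: sum_nonneg)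

lemma CS: "(\<Sum>i\<in>I. a i * b i)^2 \<le> (\<Sum>i\<in>I. (a i)^2) * (\<Sum>i\<in>I. ((b i)::real)^2)"
proof -
  have "\<bar>\<Sum>i\<in>I. a i * b i\<bar> \<le> (\<Sum>i\<in>I. \<bar>a i\<bar> * \<bar>b i\<bar>)"
    using sum_abs[of "\<lambda>i. a i * b i" I] by (simp add: abs_mult)
  also have "\<dots> \<le> L2_set a I * L2_set b I" by (rule L2_set_mult_ineq)
  finally have h: "\<bar>\<Sum>i\<in>I. a i * b i\<bar> \<le> L2_set a I * L2_set b I" .
  have "(\<Sum>i\<in>I. a i * b i)^2 \<le> (L2_set a I * L2_set b I)^2"
    using power_mono[OF h abs_ge_zero, of 2] by simp
  also have "\<dots> = (\<Sum>i\<in>I. (a i)^2) * (\<Sum>i\<in>I. (b i)^2)"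
    unfolding L2_set_def power_mult_distrib by (simp add: sum_nonneg)
  finally show ?thesis .
qed

lemma norm_mult_le: assumes A: "A \<in> carrier_mat nr nc" and x: "x \<in> carrier_vec nc"
  shows "vnorm (A *\<^sub>v x) \<le> frob_norm A * vnorm x"
proof -
  have "(vnorm (A *\<^sub>v x))^2 = (\<Sum>i<nr. ((A *\<^sub>v x) $ i)^2)"
    using A by (simp add: vnorm_sq sprod_self_sum)
  also have "\<dots> \<le> (\<Sum>i<nr. (\<Sum>j<nc. (A $$ (i,j))^2) * (vnorm x)^2)"
  proof (rule sum_mono)
    fix i assume i: "i \<in> {..<nr}"
    have "(A *\<^sub>v x) $ i = (\<Sum>j<nc. A $$ (i,j) * x $ j)"
      using A x i by (simp add: scalar_prod_def atLeast0LessThan)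
    hence "((A *\<^sub>v x) $ i)^2 \<le> (\<Sum>j<nc. (A $$ (i,j))^2) * (\<Sum>j<nc. (x $ j)^2)"
      using CS[of "\<lambda>j. A$$(i,j)" "\<lambda>j. x$j" "{..<nc}"] by simp
    thus "((A *\<^sub>v x) $ i)^2 \<le> (\<Sum>j<nc. (A $$ (i,j))^2) * (vnorm x)^2"
      using x by (simp add: vnorm_sq sprod_self_sum)
  qed
  also have "\<dots> = (frob_norm A * vnorm x)^2"
    using A by (simp add: frob_norm_sq power_mult_distrib sum_distrib_right)
  finally have "(vnorm (A *\<^sub>v x))^2 \<le> (frob_norm A * vnorm x)^2" .
  thus ?thesis using frob_norm_nonneg vnorm_nonneg
    by (meson mult_nonneg_nonneg power2_le_imp_le)
qed

lemma vnorm_L2: "vnorm v = L2_set (\<lambda>i. v $ i) {..<dim_vec v}"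
  unfolding vnorm_def L2_set_def by (simp add: sprod_self_sum)

lemma vnorm_add: assumes "v \<in> carrier_vec n" "w \<in> carrier_vec n"
  shows "vnorm (v + w) \<le> vnorm v + vnorm w"
proof -
  have "L2_set (\<lambda>i. (v + w) $ i) {..<n} = L2_set (\<lambda>i. v$i + w$i) {..<n}"
    using assms by (intro L2_set_cong) auto
  thus ?thesis using assms L2_set_triangle_ineq[of "\<lambda>i. v$i" "\<lambda>i. w$i" "{..<n}"]
    by (simp add: vnorm_L2)
qed

lemma vnorm_minus: assumes "v \<in> carrier_vec n" "w \<in> carrier_vec n"
  shows "vnorm (v - w) \<le> vnorm v + vnorm w"
proof -
  have "v - w = v + (- w)" using assms by auto
  moreover have "vnorm (- w) = vnorm w" using assms unfolding vnorm_def by simp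
  ultimately show ?thesis using vnorm_add[of v n "-w"] assms by simp
qed

lemma vnorm_smult: "vnorm (c \<cdot>\<^sub>v v) = \<bar>c\<bar> * vnorm v"
proof -
  have "(c \<cdot>\<^sub>v v) \<bullet> (c \<cdot>\<^sub>v v) = c^2 * (v \<bullet> v)"
    unfolding scalar_prod_def by (simp add: sum_distrib_left power2_eq_square algebra_simps)
  thus ?thesis unfolding vnorm_def by (simp only: real_sqrt_mult real_sqrt_abs)
qed

lemma mat_eq_by_vec: fixes A B :: "real mat" assumes A: "A \<in> carrier_mat nr nc" and B: "B \<in> carrier_mat nr nc"
  and h: "\<And>x. x \<in> carrier_vec nc \<Longrightarrow> A *\<^sub>v x = B *\<^sub>v x"
  shows "A = B"
proof (rule eq_matI)
  fix i j assume i: "i < dim_row B" and j: "j < dim_col B"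
  have "A $$ (i,j) = (A *\<^sub>v unit_vec nc j) $ i" using A B i j by simp
  also have "\<dots> = (B *\<^sub>v unit_vec nc j) $ i" using h[of "unit_vec nc j"] by simp
  also have "\<dots> = B $$ (i,j)" using B i j by simp
  finally show "A $$ (i,j) = B $$ (i,j)" .
qed (insert A B, auto)

lemma sprod_self_eq_0: assumes "(v::real vec) \<bullet> v = 0" shows "v = 0\<^sub>v (dim_vec v)"
proof -
  have "(\<Sum>i<dim_vec v. (v$i)^2) = 0" using assms by (simp add: sprod_self_sum)
  hence "\<forall>i\<in>{..<dim_vec v}. (v$i)^2 = 0" by (subst (asm) sum_nonneg_eq_0_iff) auto
  thus ?thesis by (intro eq_vecI) auto
qed

lemma householder: assumes u: "u \<in> carrier_vec k" and uu: "u \<bullet> u = (1::real)" and k: "k > 0"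
  shows "\<exists>H \<in> carrier_mat k k. transpose_mat H = H \<and> H * H = 1\<^sub>m k \<and> H *\<^sub>v unit_vec k 0 = u"
proof (cases "u = unit_vec k 0")
  case True
  thus ?thesis by (intro bexI[of _ "1\<^sub>m k"]) (auto simp: u)
next
  case False
  define w where "w = u - unit_vec k 0"
  have w: "w \<in> carrier_vec k" unfolding w_def using u by simp
  have w0: "w \<noteq> 0\<^sub>v k"
  proof
    assume "w = 0\<^sub>v k"
    hence "u = unit_vec k 0"
    proof (intro eq_vecI)
      fix i assume "w = 0\<^sub>v k" "i < dim_vec (unit_vec k 0 :: real vec)"
      hence "w $ i = 0" "i < k" by auto
      thus "u $ i = unit_vec k 0 $ i" unfolding w_def using u by simp
    qed (use u in auto)
    thus False using False by simp
  qed
  have ww: "w \<bullet> w \<noteq> 0" using sprod_self_eq_0[of w] w w0 by auto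
  define c where "c = 2 / (w \<bullet> w)"
  define H where "H = mat k k (\<lambda>(i,j). (if i = j then 1 else 0) - c * (w$i * w$j))"
  have H: "H \<in> carrier_mat k k" unfolding H_def by simp
  have Hx: "H *\<^sub>v x = x - (c * (w \<bullet> x)) \<cdot>\<^sub>v w" if x: "x \<in> carrier_vec k" for x
  proof (rule eq_vecI)
    fix i assume "i < dim_vec (x - (c * (w \<bullet> x)) \<cdot>\<^sub>v w)"
    hence i: "i < k" using x w by simp
    have "(H *\<^sub>v x) $ i = (\<Sum>j<k. ((if i = j then 1 else 0) - c * (w$i * w$j)) * x$j)"
      unfolding H_def using i x by (simp add: scalar_prod_def atLeast0LessThan)
    also have "\<dots> = (\<Sum>j<k. (if i = j then x$j else 0) - (c * w$i) * (w$j * x$j))"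
      by (rule sum.cong) (auto simp: algebra_simps)
    also have "\<dots> = (\<Sum>j<k. (if i = j then x$j else 0)) - (\<Sum>j<k. (c * w$i) * (w$j * x$j))"
      by (rule sum_subtractf)
    also have "\<dots> = (\<Sum>j<k. (if i = j then x$j else 0)) - c * w$i * (\<Sum>j<k. w$j * x$j)"
      by (simp only: sum_distrib_left)
    also have "\<dots> = x$i - c * w$i * (w \<bullet> x)"
      using i x by (simp add: scalar_prod_def atLeast0LessThan)
    finally show "(H *\<^sub>v x) $ i = (x - (c * (w \<bullet> x)) \<cdot>\<^sub>v w) $ i" using i x w by simp
  qed (insert H x w, auto)
  have HH: "H * H = 1\<^sub>m k"
  proof (rule mat_eq_by_vec[OF _ one_carrier_mat])
    show "H * H \<in> carrier_mat k k" using H by simp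
    fix x :: "real vec" assume x: "x \<in> carrier_vec k"
    have Hxc: "H *\<^sub>v x \<in> carrier_vec k" using H x by simp
    have "w \<bullet> (H *\<^sub>v x) = w \<bullet> x - c * (w \<bullet> x) * (w \<bullet> w)"
      unfolding Hx[OF x] using w x by (simp add: scalar_prod_minus_distrib)
    also have "\<dots> = - (w \<bullet> x)" unfolding c_def using ww by simp
    finally have e: "w \<bullet> (H *\<^sub>v x) = - (w \<bullet> x)" .
    have "(H * H) *\<^sub>v x = H *\<^sub>v (H *\<^sub>v x)" using H x by simp
    also have "\<dots> = (H *\<^sub>v x) - (c * (w \<bullet> (H *\<^sub>v x))) \<cdot>\<^sub>v w" by (rule Hx[OF Hxc])
    also have "\<dots> = x" unfolding e unfolding Hx[OF x] using x w by (intro eq_vecI) auto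
    finally show "(H * H) *\<^sub>v x = 1\<^sub>m k *\<^sub>v x" using x by simp
  qed
  have HT: "transpose_mat H = H" unfolding H_def by (intro eq_matI) auto
  have u0: "w \<bullet> unit_vec k 0 = u $ 0 - 1" unfolding w_def using u k by simp
  have e0: "unit_vec k 0 \<in> carrier_vec k" by simp
  have "w \<bullet> w = u \<bullet> (u - unit_vec k 0) - unit_vec k 0 \<bullet> (u - unit_vec k 0)"
    unfolding w_def by (rule minus_scalar_prod_distrib[OF u e0]) (use u in simp)
  also have "\<dots> = (u \<bullet> u - u \<bullet> unit_vec k 0) - (unit_vec k 0 \<bullet> u - unit_vec k 0 \<bullet> unit_vec k 0)"
    by (simp only: scalar_prod_minus_distrib[OF u u e0] scalar_prod_minus_distrib[OF e0 u e0])
  also have "\<dots> = u \<bullet> u - 2 * (u $ 0) + 1" using u k by simp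
  finally have "w \<bullet> w = u \<bullet> u - 2 * (u $ 0) + 1" .
  hence www: "w \<bullet> w = 2 * (1 - u $ 0)" using uu by simp
  have "c * (w \<bullet> unit_vec k 0) = -1" unfolding c_def u0 www using ww www by (simp add: field_simps)
  hence "H *\<^sub>v unit_vec k 0 = unit_vec k 0 + w" unfolding Hx[OF unit_vec_carrier] using w
    by (intro eq_vecI) auto
  also have "\<dots> = u" unfolding w_def using u by (intro eq_vecI) auto
  finally show ?thesis using H HH HT by blast
qed

definition orthoeig :: "real mat \<Rightarrow> nat \<Rightarrow> real list \<Rightarrow> real vec list \<Rightarrow> bool" where
  "orthoeig A k L vs \<longleftrightarrow> length vs = length L \<and>
     (\<forall>i<length L. vs!i \<in> carrier_vec k \<and> A *\<^sub>v (vs!i) = L!i \<cdot>\<^sub>v (vs!i)) \<and>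
     (\<forall>i<length L. \<forall>j<length L. vs!i \<bullet> vs!j = (if i = j then 1 else 0))"

definition ext0 :: "nat \<Rightarrow> real vec \<Rightarrow> real vec" where
  "ext0 k u = vec k (\<lambda>i. if i = 0 then 0 else u $ (i - 1))"

lemma ext0_carrier[simp]: "ext0 k u \<in> carrier_vec k" unfolding ext0_def by simp

lemma ext0_dim[simp]: "dim_vec (ext0 k u) = k" unfolding ext0_def by simp

lemma ext0_smult: "ext0 k (c \<cdot>\<^sub>v u) = c \<cdot>\<^sub>v ext0 k u" if "u \<in> carrier_vec (k - 1)"
  using that unfolding ext0_def by (intro eq_vecI) auto

lemma sum_shift0: "k > 0 \<Longrightarrow> (\<Sum>j<k. f j) = f 0 + (\<Sum>j<k-1. f (Suc j))"
  by (metis Suc_pred' sum.lessThan_Suc_shift)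

lemma ext0_sprod: assumes k: "k > 0" and u: "u \<in> carrier_vec (k-1)" and w: "w \<in> carrier_vec (k-1)"
  shows "ext0 k u \<bullet> ext0 k w = u \<bullet> w"
proof -
  have "ext0 k u \<bullet> ext0 k w = (\<Sum>j<k. ext0 k u $ j * ext0 k w $ j)"
    by (simp add: scalar_prod_def atLeast0LessThan)
  also have "\<dots> = (\<Sum>j<k-1. u $ j * w $ j)" using k
    by (subst sum_shift0[OF k]) (auto simp: ext0_def intro!: sum.cong)
  also have "\<dots> = u \<bullet> w" using w by (simp add: scalar_prod_def atLeast0LessThan)
  finally show ?thesis .
qed

lemma ext0_e0: assumes k: "k > 0" shows "unit_vec k 0 \<bullet> ext0 k u = 0"
  using k by (simp add: ext0_def)

lemma sym_sprod: fixes H :: "real mat" assumes H: "H \<in> carrier_mat k k" and HT: "transpose_mat H = H"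
  and HH: "H * H = 1\<^sub>m k" and x: "x \<in> carrier_vec k" and y: "y \<in> carrier_vec k"
  shows "(H *\<^sub>v x) \<bullet> (H *\<^sub>v y) = x \<bullet> y"
proof -
  have "(transpose_mat H *\<^sub>v (H *\<^sub>v x)) \<bullet> y = (H *\<^sub>v x) \<bullet> (H *\<^sub>v y)"
    by (rule transpose_vec_mult_scalar[OF H y]) (use H x in simp)
  moreover have "transpose_mat H *\<^sub>v (H *\<^sub>v x) = x"
    unfolding HT using H x by (simp flip: assoc_mult_mat_vec add: HH)
  ultimately show ?thesis by simp
qed

lemma char_poly_1x1: "char_poly (mat 1 1 (\<lambda>_. e)) = [:-e, 1:]"
  by (simp add: char_poly_defs det_def sign_def)

lemma spectral_partial:
  fixes A :: "real mat"
  assumes "A \<in> carrier_mat k k" "transpose_mat A = A" "mset L \<subseteq># proots (char_poly A)"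
  shows "\<exists>vs. orthoeig A k L vs"
  using assms
proof (induction L arbitrary: k A)
  case Nil
  show ?case by (rule exI[of _ "[]"]) (simp add: orthoeig_def)
next
  case (Cons e L k A)
  have A: "A \<in> carrier_mat k k" and AT: "transpose_mat A = A" using Cons.prems by auto
  have cp0: "char_poly A \<noteq> 0" using degree_monic_char_poly[OF A] by auto
  have "e \<in># proots (char_poly A)" using Cons.prems(3) by (simp add: mset_subset_eq_insertD)
  hence "poly (char_poly A) e = 0" using cp0 by simp
  hence ev: "eigenvalue A e" using eigenvalue_root_char_poly[OF A] by simp
  define v where "v = find_eigenvector A e"
  have "eigenvector A v e" unfolding v_def by (rule find_eigenvector[OF A ev])
  hence v: "v \<in> carrier_vec k" and v0: "v \<noteq> 0\<^sub>v k" and Av: "A *\<^sub>v v = e \<cdot>\<^sub>v v"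
    unfolding eigenvector_def using A by auto
  have k: "k > 0"
  proof (rule ccontr)
    assume "\<not> k > 0"
    hence "k = 0" by simp
    hence "v = 0\<^sub>v k" using v by (intro eq_vecI) auto
    thus False using v0 by simp
  qed
  have vv: "v \<bullet> v > 0"
    using sprod_self_eq_0[of v] v v0 sprod_self_nonneg[of v] by fastforce
  define u where "u = (1 / sqrt (v \<bullet> v)) \<cdot>\<^sub>v v"
  have u: "u \<in> carrier_vec k" unfolding u_def using v by simp
  have uu: "u \<bullet> u = 1" unfolding u_def using v vv
    by (simp add: power2_eq_square[symmetric])
  have Au: "A *\<^sub>v u = e \<cdot>\<^sub>v u" unfolding u_def
    by (simp add: mult_mat_vec[OF A v] Av smult_smult_assoc mult.commute)
  obtain H where H: "H \<in> carrier_mat k k" and HT: "transpose_mat H = H"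
    and HH: "H * H = 1\<^sub>m k" and He0: "H *\<^sub>v unit_vec k 0 = u"
    using householder[OF u uu k] by blast
  define A' where "A' = H * A * H"
  have A': "A' \<in> carrier_mat k k" unfolding A'_def using H A by simp
  have A'T: "transpose_mat A' = A'"
  proof -
    have HA: "H * A \<in> carrier_mat k k" using H A by simp
    have "transpose_mat (H * A * H) = transpose_mat H * transpose_mat (H * A)"
      by (rule transpose_mult[OF HA H])
    also have "transpose_mat (H * A) = transpose_mat A * transpose_mat H"
      by (rule transpose_mult[OF H A])
    finally show ?thesis unfolding A'_def HT AT using H A by simp
  qed
  have A'e0: "A' *\<^sub>v unit_vec k 0 = e \<cdot>\<^sub>v unit_vec k 0"
  proof -
    have HA: "H * A \<in> carrier_mat k k" using H A by simp
    have "A' *\<^sub>v unit_vec k 0 = (H * A) *\<^sub>v (H *\<^sub>v unit_vec k 0)"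
      unfolding A'_def by (rule assoc_mult_mat_vec[OF HA H]) simp
    also have "\<dots> = H *\<^sub>v (A *\<^sub>v (H *\<^sub>v unit_vec k 0))"
      by (rule assoc_mult_mat_vec[OF H A]) (use H in simp)
    finally have "A' *\<^sub>v unit_vec k 0 = H *\<^sub>v (A *\<^sub>v (H *\<^sub>v unit_vec k 0))" .
    also have "\<dots> = e \<cdot>\<^sub>v (H *\<^sub>v u)" unfolding He0 Au by (simp add: mult_mat_vec[OF H u])
    also have "H *\<^sub>v u = unit_vec k 0" unfolding He0[symmetric] using H
      by (simp flip: assoc_mult_mat_vec add: HH)
    finally show ?thesis .
  qed
  have A'col: "A' $$ (i, 0) = (if i = 0 then e else 0)" if "i < k" for i
  proof -
    have "A' $$ (i, 0) = (A' *\<^sub>v unit_vec k 0) $ i" using A' that k by simp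
    thus ?thesis unfolding A'e0 using that by simp
  qed
  have A'row: "A' $$ (0, j) = (if j = 0 then e else 0)" if "j < k" for j
  proof -
    have "A' $$ (0, j) = transpose_mat A' $$ (j, 0)" using A' that k by simp
    thus ?thesis unfolding A'T using A'col[OF that] by simp
  qed
  define A3 where "A3 = mat (k-1) (k-1) (\<lambda>(i,j). A' $$ (Suc i, Suc j))"
  have A3: "A3 \<in> carrier_mat (k-1) (k-1)" unfolding A3_def by simp
  have A3T: "transpose_mat A3 = A3" unfolding A3_def
  proof (intro eq_matI)
    fix i j assume "i < dim_row (mat (k-1) (k-1) (\<lambda>(i,j). A' $$ (Suc i, Suc j)))"
      "j < dim_col (mat (k-1) (k-1) (\<lambda>(i,j). A' $$ (Suc i, Suc j)))"
    hence ij: "Suc i < k" "Suc j < k" by auto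
    have "A' $$ (Suc j, Suc i) = transpose_mat A' $$ (Suc i, Suc j)" using A' ij by simp
    thus "transpose_mat (mat (k-1) (k-1) (\<lambda>(i,j). A' $$ (Suc i, Suc j))) $$ (i, j) =
      mat (k-1) (k-1) (\<lambda>(i,j). A' $$ (Suc i, Suc j)) $$ (i, j)" unfolding A'T using ij by simp
  qed auto
  have A'blk: "A' = four_block_mat (mat 1 1 (\<lambda>_. e)) (0\<^sub>m 1 (k-1)) (0\<^sub>m (k-1) 1) A3"
  proof (rule eq_matI)
    fix i j assume ij: "i < dim_row (four_block_mat (mat 1 1 (\<lambda>_. e)) (0\<^sub>m 1 (k-1)) (0\<^sub>m (k-1) 1) A3)"
      "j < dim_col (four_block_mat (mat 1 1 (\<lambda>_. e)) (0\<^sub>m 1 (k-1)) (0\<^sub>m (k-1) 1) A3)"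
    hence i: "i < k" and j: "j < k" using A3 k by auto
    show "A' $$ (i, j) = four_block_mat (mat 1 1 (\<lambda>_. e)) (0\<^sub>m 1 (k-1)) (0\<^sub>m (k-1) 1) A3 $$ (i, j)"
    proof (cases "i = 0")
      case True thus ?thesis using A'row[OF j] i j A3 k by simp
    next
      case False
      show ?thesis
      proof (cases "j = 0")
        case True thus ?thesis using A'col[OF i] i j A3 k \<open>i \<noteq> 0\<close> by simp
      next
        case False
        obtain i' j' where "i = Suc i'" "j = Suc j'" using \<open>i \<noteq> 0\<close> False
          by (metis not0_implies_Suc)
        thus ?thesis using i j A3 k unfolding A3_def by simp
      qed
    qed
  qed (use A' A3 k in auto)
  have sim: "similar_mat A A'"
    unfolding similar_mat_def similar_mat_wit_def
  proof (intro exI[of _ H])+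
    have "H * A' * H = (H * H) * A * (H * H)" unfolding A'_def using H A
      by (simp add: assoc_mult_mat[of _ k k _ k _ k])
    also have "\<dots> = A" using A by (simp add: HH)
    finally show "let n = dim_row A in {A, A', H, H} \<subseteq> carrier_mat n n \<and> H * H = 1\<^sub>m n \<and>
      H * H = 1\<^sub>m n \<and> A = H * A' * H" using A A' H HH by (simp add: Let_def)
  qed
  have "char_poly A' = char_poly (mat 1 1 (\<lambda>_. e)) * char_poly A3"
    unfolding A'blk by (rule char_poly_four_block_zeros_col) (use A3 in auto)
  hence cpA: "char_poly A = [:-e, 1:] * char_poly A3"
    unfolding char_poly_similar[OF sim] char_poly_1x1 .
  have cp3: "char_poly A3 \<noteq> 0" using degree_monic_char_poly[OF A3] by auto
  have "proots (char_poly A) = proots [:-e, 1:] + proots (char_poly A3)"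
    unfolding cpA by (rule proots_mult) (use cp3 in auto)
  also have "proots [:-e, 1:] = {#e#}" using proots_linear_factor[of "-e"] by simp
  finally have "proots (char_poly A) = add_mset e (proots (char_poly A3))" by simp
  hence "mset L \<subseteq># proots (char_poly A3)" using Cons.prems(3) by simp
  from Cons.IH[OF A3 A3T this] obtain vs' where vs': "orthoeig A3 (k-1) L vs'" by blast
  define vs where "vs = u # map (\<lambda>w. H *\<^sub>v ext0 k w) vs'"
  have AH: "A *\<^sub>v (H *\<^sub>v x) = H *\<^sub>v (A' *\<^sub>v x)" if x: "x \<in> carrier_vec k" for x
  proof -
    have "H * A' = (H * H) * A * H" unfolding A'_def using H A
      by (simp add: assoc_mult_mat[of _ k k _ k _ k])
    hence "H * A' = A * H" using A H by (simp add: HH)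
    hence "H *\<^sub>v (A' *\<^sub>v x) = A *\<^sub>v (H *\<^sub>v x)" using A H A' x
      by (metis assoc_mult_mat_vec)
    thus ?thesis by simp
  qed
  have A'ext: "A' *\<^sub>v ext0 k w = ext0 k (A3 *\<^sub>v w)" if w: "w \<in> carrier_vec (k-1)" for w
  proof (rule eq_vecI)
    fix i assume "i < dim_vec (ext0 k (A3 *\<^sub>v w))"
    hence i: "i < k" by (simp add: ext0_def)
    have "(A' *\<^sub>v ext0 k w) $ i = (\<Sum>j<k. A' $$ (i, j) * ext0 k w $ j)"
      using A' i by (auto simp: scalar_prod_def atLeast0LessThan intro!: sum.cong)
    also have "\<dots> = (\<Sum>j<k-1. A' $$ (i, Suc j) * w $ j)"
      by (subst sum_shift0[OF k]) (auto simp: ext0_def k intro!: sum.cong)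
    also have "\<dots> = ext0 k (A3 *\<^sub>v w) $ i"
    proof (cases i)
      case 0 thus ?thesis using A'row k by (simp add: ext0_def)
    next
      case (Suc i')
      thus ?thesis using i w A3 unfolding ext0_def A3_def
        by (simp add: scalar_prod_def atLeast0LessThan)
    qed
    finally show "(A' *\<^sub>v ext0 k w) $ i = ext0 k (A3 *\<^sub>v w) $ i" .
  qed (use A' in simp)
  have len: "length vs' = length L" using vs' unfolding orthoeig_def by simp
  have P1: "vs ! i \<in> carrier_vec k \<and> A *\<^sub>v vs ! i = (e # L) ! i \<cdot>\<^sub>v vs ! i"
    if i: "i < length (e # L)" for i
    proof (cases i)
      case 0 thus ?thesis using u Au unfolding vs_def by simp
    next
      case (Suc i')
      have i': "i' < length L" using i Suc by simp
      have w: "vs' ! i' \<in> carrier_vec (k-1)" and Aw: "A3 *\<^sub>v vs' ! i' = L ! i' \<cdot>\<^sub>v vs' ! i'"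
        using vs' i' unfolding orthoeig_def by auto
      have "A *\<^sub>v (H *\<^sub>v ext0 k (vs' ! i')) = L ! i' \<cdot>\<^sub>v (H *\<^sub>v ext0 k (vs' ! i'))"
        unfolding AH[OF ext0_carrier] A'ext[OF w] Aw ext0_smult[OF w]
        by (rule mult_mat_vec[OF H ext0_carrier])
      thus ?thesis using Suc i' len H unfolding vs_def by simp
    qed
  have P2: "vs ! i \<bullet> vs ! j = (if i = j then 1 else 0)"
    if i: "i < length (e # L)" and j: "j < length (e # L)" for i j
  proof -
    have wc: "vs' ! a \<in> carrier_vec (k-1)" if "a < length L" for a
      using vs' that unfolding orthoeig_def by auto
    have wo: "vs' ! a \<bullet> vs' ! b = (if a = b then 1 else 0)" if "a < length L" "b < length L" for a b
      using vs' that unfolding orthoeig_def by auto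
    have e0c: "unit_vec k 0 \<in> carrier_vec k" by simp
    have uH: "u \<bullet> (H *\<^sub>v ext0 k w) = 0" for w
      unfolding He0[symmetric] sym_sprod[OF H HT HH e0c ext0_carrier] by (rule ext0_e0[OF k])
    have Hu: "(H *\<^sub>v ext0 k w) \<bullet> u = 0" for w
      using uH[of w] comm_scalar_prod[OF u, of "H *\<^sub>v ext0 k w"] H by simp
    show "vs ! i \<bullet> vs ! j = (if i = j then 1 else 0)"
    proof (cases i)
      case 0
      thus ?thesis by (cases j) (use uu uH len j in \<open>auto simp: vs_def\<close>)
    next
      case (Suc i')
      show ?thesis
      proof (cases j)
        case 0 thus ?thesis using Suc Hu len i by (simp add: vs_def)
      next
        case (Suc j')
        have i': "i' < length L" and j': "j' < length L" using i j \<open>i = Suc i'\<close> Suc by auto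
        show ?thesis using \<open>i = Suc i'\<close> Suc len i' j'
          by (simp add: vs_def sym_sprod[OF H HT HH ext0_carrier ext0_carrier]
                ext0_sprod[OF k wc[OF i'] wc[OF j']] wo[OF i' j'])
      qed
    qed
  qed
  have "orthoeig A k (e # L) vs"
    unfolding orthoeig_def using len P1 P2 by (simp add: vs_def)
  thus ?case by blast
qed

lemma sorted_list_sqrt: "sorted_list_of_multiset (image_mset sqrt R) = map sqrt (sorted_list_of_multiset R)"
proof -
  have "sorted (map sqrt (sorted_list_of_multiset R))"
    by (auto simp: sorted_map intro: sorted_wrt_mono_rel[OF _ sorted_sorted_list_of_multiset])
  moreover have "image_mset sqrt R = mset (map sqrt (sorted_list_of_multiset R))" by simp
  ultimately show ?thesis by (metis sorted_list_of_multiset_mset sorted_sort_id)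
qed

lemma sigma_list: fixes S :: "real mat" assumes sp: "sigma p S > 0"
  shows "\<exists>L. length L = p \<and> mset L \<subseteq># proots (char_poly (transpose_mat S * S)) \<and>
             (\<forall>x\<in>set L. x \<ge> (sigma p S)^2)"
proof -
  define R where "R = proots (char_poly (transpose_mat S * S))"
  define sl where "sl = sorted_list_of_multiset R"
  have sv: "singular_values S = map sqrt (rev sl)"
    unfolding singular_values_def sl_def R_def sorted_list_sqrt by (simp add: rev_map)
  have p: "1 \<le> p" "p \<le> length sl" and sig: "sigma p S = sqrt (rev sl ! (p - 1))"
    using sp unfolding sigma_def sv by (auto split: if_splits)
  define L where "L = take p (rev sl)"
  have "length L = p" unfolding L_def using p by simp
  moreover have "mset L \<subseteq># R"
  proof -
    have "mset L \<subseteq># mset (rev sl)" unfolding L_def by (metis append_take_drop_id mset_append mset_subset_eq_add_left)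
    thus ?thesis unfolding sl_def by simp
  qed
  moreover have "\<forall>x\<in>set L. x \<ge> (sigma p S)^2"
  proof
    fix x assume "x \<in> set L"
    then obtain i where i: "i < p" and x: "x = rev sl ! i" unfolding L_def using p
      by (auto simp: in_set_conv_nth)
    have "sorted_wrt (\<ge>) (rev sl)" unfolding sl_def by (simp add: sorted_wrt_rev)
    hence "rev sl ! (p - 1) \<le> rev sl ! i \<or> i = p - 1"
    proof (cases "i = p - 1")
      case False
      hence "i < p - 1" using i by simp
      moreover have "p - 1 < length (rev sl)" using p by simp
      ultimately show ?thesis using sorted_wrt_nth_less[OF \<open>sorted_wrt (\<ge>) (rev sl)\<close>] by blast
    qed simp
    hence le: "rev sl ! (p - 1) \<le> x" using x by auto
    have pos: "rev sl ! (p - 1) > 0" using sp sig by (metis real_sqrt_gt_0_iff)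
    have "(sigma p S)^2 = rev sl ! (p - 1)" using sig pos by simp
    thus "x \<ge> (sigma p S)^2" using le by simp
  qed
  ultimately show ?thesis unfolding R_def by blast
qed

lemma orthoeig_U:
  fixes S :: "real mat"
  assumes S: "S \<in> carrier_mat n m" and oe: "orthoeig (transpose_mat S * S) m L vs"
    and Lge: "\<forall>x\<in>set L. x \<ge> t^2" and t: "t \<ge> 0"
    and y: "y \<in> carrier_vec (length L)"
  shows "vnorm (mat_of_cols m vs *\<^sub>v y) = vnorm y"
    "vnorm (S *\<^sub>v (mat_of_cols m vs *\<^sub>v y)) \<ge> t * vnorm y"
proof -
  define p where "p = length L"
  define U where "U = mat_of_cols m vs"
  define A where "A = transpose_mat S * S"
  have len: "length vs = p" using oe unfolding orthoeig_def p_def by simp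
  have vsc: "vs ! j \<in> carrier_vec m" if "j < p" for j using oe that unfolding orthoeig_def p_def by auto
  have vsA: "A *\<^sub>v (vs ! j) = L ! j \<cdot>\<^sub>v (vs ! j)" if "j < p" for j
    using oe that unfolding orthoeig_def p_def A_def by auto
  have vso: "vs ! i \<bullet> vs ! j = (if i = j then 1 else 0)" if "i < p" "j < p" for i j
    using oe that unfolding orthoeig_def p_def by auto
  have U: "U \<in> carrier_mat m p" unfolding U_def using len mat_of_cols_carrier(1)[of m vs] by simp
  have A: "A \<in> carrier_mat m m" unfolding A_def using S by simp
  have colU: "col U j = vs ! j" if "j < p" for j unfolding U_def using that len vsc by simp
  have UTU: "transpose_mat U * U = 1\<^sub>m p"
  proof (rule eq_matI)
    fix i j assume "i < dim_row (1\<^sub>m p)" "j < dim_col (1\<^sub>m p)"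
    hence ij: "i < p" "j < p" by auto
    have "(transpose_mat U * U) $$ (i, j) = col U i \<bullet> col U j" using U ij by simp
    thus "(transpose_mat U * U) $$ (i, j) = 1\<^sub>m p $$ (i, j)" using ij colU vso by simp
  qed (use U in auto)
  define D where "D = mat p p (\<lambda>(i,j). if i = j then L ! i else 0)"
  have D: "D \<in> carrier_mat p p" unfolding D_def by simp
  have AU: "A * U = U * D"
  proof (rule eq_matI)
    fix i j assume "i < dim_row (U * D)" "j < dim_col (U * D)"
    hence ij: "i < m" "j < p" using U D by auto
    have "(A * U) $$ (i, j) = (A *\<^sub>v col U j) $ i" using A U ij by simp
    also have "\<dots> = (L ! j \<cdot>\<^sub>v vs ! j) $ i" using colU vsA ij by simp
    also have "\<dots> = L ! j * U $$ (i, j)"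
    proof -
      have "U $$ (i, j) = col U j $ i" using U ij by simp
      thus ?thesis using colU ij vsc[OF ij(2)] by simp
    qed
    also have "\<dots> = (U * D) $$ (i, j)"
    proof -
      have "col D j = L ! j \<cdot>\<^sub>v unit_vec p j" unfolding D_def using ij by (intro eq_vecI) auto
      hence "(U * D) $$ (i, j) = row U i \<bullet> (L ! j \<cdot>\<^sub>v unit_vec p j)" using U D ij by simp
      also have "\<dots> = L ! j * U $$ (i, j)" using U ij by simp
      finally show ?thesis by simp
    qed
    finally show "(A * U) $$ (i, j) = (U * D) $$ (i, j)" .
  qed (use A U D in auto)
  have y': "y \<in> carrier_vec p" using y unfolding p_def .
  have Uy: "U *\<^sub>v y \<in> carrier_vec m" using U y' by simp
  have key: "(U *\<^sub>v z) \<bullet> (U *\<^sub>v y) = z \<bullet> y" if z: "z \<in> carrier_vec p" for z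
  proof -
    have "(transpose_mat U *\<^sub>v (U *\<^sub>v z)) \<bullet> y = (U *\<^sub>v z) \<bullet> (U *\<^sub>v y)"
      by (rule transpose_vec_mult_scalar[OF U y']) (use U z in simp)
    moreover have "transpose_mat U *\<^sub>v (U *\<^sub>v z) = z" using U z
      by (simp flip: assoc_mult_mat_vec[of _ p m] add: UTU)
    ultimately show ?thesis by simp
  qed
  show "vnorm (mat_of_cols m vs *\<^sub>v y) = vnorm y"
    unfolding U_def[symmetric] vnorm_def using key[OF y'] by simp
  have "(S *\<^sub>v (U *\<^sub>v y)) \<bullet> (S *\<^sub>v (U *\<^sub>v y)) = (transpose_mat S *\<^sub>v (S *\<^sub>v (U *\<^sub>v y))) \<bullet> (U *\<^sub>v y)"
    by (rule transpose_vec_mult_scalar[OF S Uy, symmetric]) (use S Uy in simp)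
  also have "transpose_mat S *\<^sub>v (S *\<^sub>v (U *\<^sub>v y)) = U *\<^sub>v (D *\<^sub>v y)"
  proof -
    have ST: "transpose_mat S \<in> carrier_mat m n" using S by simp
    have "(A * U) *\<^sub>v y = A *\<^sub>v (U *\<^sub>v y)" by (rule assoc_mult_mat_vec[OF A U y'])
    also have "\<dots> = transpose_mat S *\<^sub>v (S *\<^sub>v (U *\<^sub>v y))"
      unfolding A_def by (rule assoc_mult_mat_vec[OF ST S Uy])
    finally have "transpose_mat S *\<^sub>v (S *\<^sub>v (U *\<^sub>v y)) = (A * U) *\<^sub>v y" by simp
    also have "\<dots> = U *\<^sub>v (D *\<^sub>v y)" unfolding AU using U D y' by simp
    finally show ?thesis .
  qed
  also have "(U *\<^sub>v (D *\<^sub>v y)) \<bullet> (U *\<^sub>v y) = (D *\<^sub>v y) \<bullet> y" by (rule key) (use D y' in simp)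
  also have "\<dots> = (\<Sum>i<p. L ! i * (y $ i)^2)"
  proof -
    have "D *\<^sub>v y = vec p (\<lambda>i. L ! i * y $ i)"
    proof (rule eq_vecI)
      fix i assume "i < dim_vec (vec p (\<lambda>i. L ! i * y $ i))"
      hence i: "i < p" by simp
      have "row D i = L ! i \<cdot>\<^sub>v unit_vec p i" unfolding D_def using i by (intro eq_vecI) auto
      thus "(D *\<^sub>v y) $ i = vec p (\<lambda>i. L ! i * y $ i) $ i" using i D y' by simp
    qed (use D in simp)
    thus ?thesis using y' by (simp add: scalar_prod_def atLeast0LessThan power2_eq_square mult.assoc)
  qed
  also have "\<dots> \<ge> (\<Sum>i<p. t^2 * (y $ i)^2)"
    by (rule sum_mono) (use Lge in \<open>auto simp: p_def intro!: mult_right_mono\<close>)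
  finally have "(vnorm (S *\<^sub>v (U *\<^sub>v y)))^2 \<ge> (t * vnorm y)^2"
    unfolding vnorm_sq power_mult_distrib using y' by (simp add: sprod_self_sum sum_distrib_left)
  thus "vnorm (S *\<^sub>v (mat_of_cols m vs *\<^sub>v y)) \<ge> t * vnorm y"
    unfolding U_def[symmetric] by (rule power2_le_imp_le) (use vnorm_nonneg in auto)
qed

lemma (in vec_space) rank_mult_le:
  assumes T: "T \<in> carrier_mat n nc" and Y: "Y \<in> carrier_mat nc r"
  shows "rank (T * Y) \<le> rank T"
proof -
  define W where "W = span (set (cols T))"
  have TY: "T * Y \<in> carrier_mat n r" using T Y by simp
  have sub1: "span (set (cols (T * Y))) \<subseteq> W"
  proof
    fix x assume "x \<in> span (set (cols (T * Y)))"
    hence "x \<in> col_space (T * Y)" unfolding col_space_def .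
    then obtain z where z: "z \<in> carrier_vec r" and x: "x = (T * Y) *\<^sub>v z"
      unfolding col_space_eq[OF TY] using TY by auto
    have "x = T *\<^sub>v (Y *\<^sub>v z)" unfolding x using T Y z by simp
    moreover have "Y *\<^sub>v z \<in> carrier_vec nc" using Y z by simp
    ultimately have "x \<in> col_space T" unfolding col_space_eq[OF T] using T by auto
    thus "x \<in> W" unfolding W_def col_space_def .
  qed
  have sW: "VectorSpace.subspace class_ring W V" unfolding W_def
    using T by (metis cols_dim carrier_matD(1) span_is_subspace)
  have sTY: "VectorSpace.subspace class_ring (span (set (cols (T * Y)))) V"
    using TY by (metis cols_dim carrier_matD(1) span_is_subspace)
  have subspace: "VectorSpace.subspace class_ring (span (set (cols (T * Y)))) (vs W)"
    using nested_subspaces[OF sW sTY sub1] .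
  have fin: "vectorspace.fin_dim class_ring (vs W)" unfolding W_def using T fin_dim_span_cols by blast
  have finTY: "vectorspace.fin_dim class_ring (span_vs (set (cols (T * Y))))"
    using TY fin_dim_span_cols by blast
  have "rank (T * Y) \<le> vectorspace.dim class_ring (vs W)" unfolding rank_def
    using finTY vectorspace.subspace_dim[OF subspace_is_vs[OF sW] subspace fin] by auto
  thus ?thesis unfolding rank_def W_def .
qed

lemma mult_unit_col: fixes A :: "'a::semiring_1 mat" assumes A: "A \<in> carrier_mat n m" and j: "j < m"
  shows "A *\<^sub>v unit_vec m j = col A j"
proof (rule eq_vecI)
  fix i assume "i < dim_vec (col A j)"
  hence i: "i < n" using A by simp
  have "row A i \<bullet> unit_vec m j = row A i $ j" using j by simp
  thus "(A *\<^sub>v unit_vec m j) $ i = col A j $ i" using A i j by simp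
qed (use A in simp)

lemma (in vec_space) inj_full_rank:
  assumes G: "G \<in> carrier_mat n k"
    and inj: "\<And>v. v \<in> carrier_vec k \<Longrightarrow> G *\<^sub>v v = 0\<^sub>v n \<Longrightarrow> v = 0\<^sub>v k"
  shows "rank G = k"
proof -
  have dist: "distinct (cols G)"
  proof (rule ccontr)
    assume "\<not> distinct (cols G)"
    then obtain i j where ij: "i < length (cols G)" "j < length (cols G)" "i \<noteq> j"
      "cols G ! i = cols G ! j" by (metis distinct_conv_nth)
    hence ij': "i < k" "j < k" "col G i = col G j" using G by auto
    define v :: "'a vec" where "v = unit_vec k i - unit_vec k j"
    have vc: "v \<in> carrier_vec k" unfolding v_def by simp
    have "G *\<^sub>v v = G *\<^sub>v unit_vec k i - G *\<^sub>v unit_vec k j"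
      unfolding v_def using G by (simp add: mult_minus_distrib_mat_vec)
    also have "\<dots> = 0\<^sub>v n" using mult_unit_col[OF G] ij' G by simp
    finally have "v = 0\<^sub>v k" using inj vc by blast
    hence "v $ i = 0" using ij' by simp
    thus False unfolding v_def using ij' ij(3) by simp
  qed
  have "lin_indpt (set (cols G))"
  proof
    assume "lin_dep (set (cols G))"
    then obtain v :: "'a vec" where "v \<in> carrier_vec k" "v \<noteq> 0\<^sub>v k" "G *\<^sub>v v = 0\<^sub>v n"
      using lin_depE[OF G _ dist] by blast
    thus False using inj by blast
  qed
  thus ?thesis using lin_indpt_full_rank[OF G dist] by blast
qed

lemma in_range:
  fixes T X :: "real mat"
  assumes T: "T \<in> carrier_mat N C" and rk: "vec_space.rank N T \<le> p" and X: "X \<in> carrier_mat C p"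
    and inj: "\<And>y. y \<in> carrier_vec p \<Longrightarrow> (T * X) *\<^sub>v y = 0\<^sub>v N \<Longrightarrow> y = 0\<^sub>v p"
    and z: "z \<in> carrier_vec C"
  shows "\<exists>y\<in>carrier_vec p. T *\<^sub>v z = (T * X) *\<^sub>v y"
proof -
  define Y where "Y = mat C (Suc p) (\<lambda>(i,j). if j < p then X $$ (i,j) else z $ i)"
  have Y: "Y \<in> carrier_mat C (Suc p)" unfolding Y_def by simp
  have G: "T * Y \<in> carrier_mat N (Suc p)" using T Y by simp
  have "vec_space.rank N (T * Y) \<le> vec_space.rank N T" by (rule vec_space.rank_mult_le[OF T Y])
  hence "vec_space.rank N (T * Y) \<noteq> Suc p" using rk by simp
  hence "\<not> (\<forall>v. v \<in> carrier_vec (Suc p) \<longrightarrow> (T * Y) *\<^sub>v v = 0\<^sub>v N \<longrightarrow> v = 0\<^sub>v (Suc p))"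
    using vec_space.inj_full_rank[OF G] by blast
  then obtain v where v: "v \<in> carrier_vec (Suc p)" and Gv: "(T * Y) *\<^sub>v v = 0\<^sub>v N"
    and v0: "v \<noteq> 0\<^sub>v (Suc p)" by blast
  define vy where "vy = vec p (\<lambda>i. v $ i)"
  have vy: "vy \<in> carrier_vec p" unfolding vy_def by simp
  have Yv: "Y *\<^sub>v v = X *\<^sub>v vy + (v $ p) \<cdot>\<^sub>v z"
  proof (rule eq_vecI)
    fix i assume "i < dim_vec (X *\<^sub>v vy + (v $ p) \<cdot>\<^sub>v z)"
    hence i: "i < C" using z by simp
    have "(Y *\<^sub>v v) $ i = (\<Sum>j<Suc p. Y $$ (i, j) * v $ j)"
      using Y v i by (auto simp: scalar_prod_def atLeast0LessThan intro!: sum.cong)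
    also have "\<dots> = (\<Sum>j<p. X $$ (i, j) * v $ j) + z $ i * v $ p"
      unfolding Y_def using i by (simp add: sum.lessThan_Suc)
    also have "\<dots> = (X *\<^sub>v vy + (v $ p) \<cdot>\<^sub>v z) $ i"
      using X z i vy by (auto simp: scalar_prod_def atLeast0LessThan vy_def intro!: sum.cong)
    finally show "(Y *\<^sub>v v) $ i = (X *\<^sub>v vy + (v $ p) \<cdot>\<^sub>v z) $ i" .
  qed (use Y z in simp)
  have "(T * Y) *\<^sub>v v = T *\<^sub>v (X *\<^sub>v vy + (v $ p) \<cdot>\<^sub>v z)" using T Y v Yv by simp
  also have "\<dots> = (T * X) *\<^sub>v vy + (v $ p) \<cdot>\<^sub>v (T *\<^sub>v z)"
    using T X vy z by (simp add: mult_add_distrib_mat_vec mult_mat_vec)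
  finally have eq: "(T * X) *\<^sub>v vy + (v $ p) \<cdot>\<^sub>v (T *\<^sub>v z) = 0\<^sub>v N" using Gv by simp
  have eqi: "((T * X) *\<^sub>v vy) $ i = - (v $ p) * (T *\<^sub>v z) $ i" if i: "i < N" for i
  proof -
    have "((T * X) *\<^sub>v vy + (v $ p) \<cdot>\<^sub>v (T *\<^sub>v z)) $ i = 0" using eq i by simp
    thus ?thesis using i T X z vy by simp
  qed
  show ?thesis
  proof (cases "v $ p = 0")
    case True
    hence "(T * X) *\<^sub>v vy = 0\<^sub>v N" using eqi T X by (intro eq_vecI) auto
    hence "vy = 0\<^sub>v p" using inj vy by blast
    hence "v = 0\<^sub>v (Suc p)"
    proof (intro eq_vecI)
      fix i assume h: "vy = 0\<^sub>v p" "i < dim_vec (0\<^sub>v (Suc p) :: real vec)"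
      show "v $ i = 0\<^sub>v (Suc p) $ i"
      proof (cases "i = p")
        case False
        hence "i < p" using h by simp
        thus ?thesis using arg_cong[OF h(1), of "\<lambda>w. w $ i"] unfolding vy_def by simp
      qed (use True in simp)
    qed (use v in simp)
    thus ?thesis using v0 by simp
  next
    case False
    define y where "y = (- 1 / v $ p) \<cdot>\<^sub>v vy"
    have "(T * X) *\<^sub>v y = (- 1 / v $ p) \<cdot>\<^sub>v ((T * X) *\<^sub>v vy)"
      unfolding y_def using T X vy by (simp add: mult_mat_vec)
    also have "(T * X) *\<^sub>v vy = - ((v $ p) \<cdot>\<^sub>v (T *\<^sub>v z))"
      using eqi T X z by (intro eq_vecI) auto
    also have "(- 1 / v $ p) \<cdot>\<^sub>v (- ((v $ p) \<cdot>\<^sub>v (T *\<^sub>v z))) = T *\<^sub>v z"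
      using False T z by (intro eq_vecI) auto
    finally show ?thesis using y_def vy by (intro bexI[of _ y]) auto
  qed
qed

lemma vnorm_mat_diff: fixes A B :: "real mat"
  assumes A: "A \<in> carrier_mat n m" and B: "B \<in> carrier_mat n m" and x: "x \<in> carrier_vec m"
    and fe: "frob_norm (A - B) \<le> e"
  shows "vnorm (A *\<^sub>v x - B *\<^sub>v x) \<le> e * vnorm x"
proof -
  have "A *\<^sub>v x - B *\<^sub>v x = (A - B) *\<^sub>v x" using A B x by (simp add: minus_mult_distrib_mat_vec)
  also have "vnorm \<dots> \<le> frob_norm (A - B) * vnorm x" by (rule norm_mult_le[of "A - B" n m x]) (use A B x in auto)
  also have "\<dots> \<le> e * vnorm x" using fe vnorm_nonneg by (simp add: mult_right_mono)
  finally show ?thesis .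
qed

lemma vnorm_mat_le: fixes A :: "real mat"
  assumes A: "A \<in> carrier_mat n m" and x: "x \<in> carrier_vec m" and fe: "frob_norm A \<le> e"
  shows "vnorm (A *\<^sub>v x) \<le> e * vnorm x"
  using norm_mult_le[OF A x] fe vnorm_nonneg[of x] by (meson mult_right_mono order_trans)

lemma column_bound:
  fixes H11 S11 H21 S21 U :: "real mat" and y yh h s h2 s2 :: "real vec"
  assumes H11: "H11 \<in> carrier_mat n1 m1" and S11: "S11 \<in> carrier_mat n1 m1"
    and H21: "H21 \<in> carrier_mat n2 m1" and S21: "S21 \<in> carrier_mat n2 m1"
    and U: "U \<in> carrier_mat m1 p"
    and y: "y \<in> carrier_vec p" and yh: "yh \<in> carrier_vec p"
    and Unorm: "\<And>v. v \<in> carrier_vec p \<Longrightarrow> vnorm (U *\<^sub>v v) = vnorm v"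
    and Slow: "\<And>v. v \<in> carrier_vec p \<Longrightarrow> \<sigma> * vnorm v \<le> vnorm (S11 *\<^sub>v (U *\<^sub>v v))"
    and Hlow: "\<And>v. v \<in> carrier_vec p \<Longrightarrow> \<sigma> / 2 * vnorm v \<le> vnorm (H11 *\<^sub>v (U *\<^sub>v v))"
    and s: "S11 *\<^sub>v (U *\<^sub>v y) = s" and h: "H11 *\<^sub>v (U *\<^sub>v yh) = h"
    and s2: "S21 *\<^sub>v (U *\<^sub>v y) = s2" and h2: "H21 *\<^sub>v (U *\<^sub>v yh) = h2"
    and f11: "frob_norm (H11 - S11) \<le> \<epsilon>" and f21: "frob_norm (H21 - S21) \<le> \<epsilon>"
    and fS21: "frob_norm S21 \<le> M" and sig: "\<sigma> > 0"
  shows "vnorm (h2 - s2) \<le> (2 * (\<epsilon> + M) / \<sigma>) * vnorm (h - s) + (2 * \<epsilon> / \<sigma> + 2 * M * \<epsilon> / \<sigma>^2) * vnorm s"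
proof -
  define x where "x = U *\<^sub>v y"
  define xh where "xh = U *\<^sub>v yh"
  have x: "x \<in> carrier_vec m1" and xh: "xh \<in> carrier_vec m1" unfolding x_def xh_def using U y yh by auto
  have hc: "h \<in> carrier_vec n1" and sc: "s \<in> carrier_vec n1" using h s H11 S11 x xh
    unfolding x_def xh_def by auto
  have eps: "\<epsilon> \<ge> 0" using f11 frob_norm_nonneg order_trans by blast
  have M: "M \<ge> 0" using fS21 frob_norm_nonneg order_trans by blast
  have ny: "vnorm y \<le> vnorm s / \<sigma>" using Slow[OF y] s sig by (simp add: field_simps)
  have "\<sigma> / 2 * vnorm yh \<le> vnorm h" using Hlow[OF yh] h by simp
  also have "vnorm h \<le> vnorm (h - s) + vnorm s"
  proof -
    have "h = (h - s) + s" using hc sc by (intro eq_vecI) auto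
    hence "vnorm h = vnorm ((h - s) + s)" by simp
    also have "\<dots> \<le> vnorm (h - s) + vnorm s" by (rule vnorm_add) (use hc sc in auto)
    finally show ?thesis .
  qed
  finally have nyh: "vnorm yh \<le> 2 / \<sigma> * (vnorm (h - s) + vnorm s)" using sig by (simp add: field_simps)
  have yd: "yh - y \<in> carrier_vec p" using y yh by simp
  have Ud: "U *\<^sub>v (yh - y) = xh - x" unfolding x_def xh_def using U y yh by (simp add: mult_minus_distrib_mat_vec)
  have "H11 *\<^sub>v (xh - x) = (h - s) - (H11 *\<^sub>v x - S11 *\<^sub>v x)"
    unfolding x_def xh_def h[symmetric] s[symmetric] using H11 S11 U y yh
    by (simp add: mult_minus_distrib_mat_vec) (intro eq_vecI; simp)
  hence "vnorm (H11 *\<^sub>v (xh - x)) \<le> vnorm (h - s) + \<epsilon> * vnorm y"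
    using vnorm_minus[of "h - s" n1 "H11 *\<^sub>v x - S11 *\<^sub>v x"] hc sc H11 S11 x
      vnorm_mat_diff[OF H11 S11 x f11] Unorm[OF y] unfolding x_def by auto
  moreover have "\<sigma> / 2 * vnorm (yh - y) \<le> vnorm (H11 *\<^sub>v (xh - x))" using Hlow[OF yd] Ud by simp
  ultimately have nd: "vnorm (yh - y) \<le> 2 / \<sigma> * (vnorm (h - s) + \<epsilon> * vnorm y)"
    using sig by (simp add: field_simps)
  have "h2 - s2 = (H21 *\<^sub>v xh - S21 *\<^sub>v xh) + S21 *\<^sub>v (xh - x)"
    unfolding h2[symmetric] s2[symmetric] x_def[symmetric] xh_def[symmetric] using H21 S21 x xh
    by (intro eq_vecI) (auto simp: mult_minus_distrib_mat_vec)
  hence "vnorm (h2 - s2) \<le> vnorm (H21 *\<^sub>v xh - S21 *\<^sub>v xh) + vnorm (S21 *\<^sub>v (xh - x))"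
    using vnorm_add[of "H21 *\<^sub>v xh - S21 *\<^sub>v xh" n2 "S21 *\<^sub>v (xh - x)"] H21 S21 x xh by auto
  also have "\<dots> \<le> \<epsilon> * vnorm xh + M * vnorm (xh - x)"
    using vnorm_mat_diff[OF H21 S21 xh f21] vnorm_mat_le[OF S21 _ fS21, of "xh - x"] x xh
    by (intro add_mono) auto
  also have "\<dots> = \<epsilon> * vnorm yh + M * vnorm (yh - y)"
  proof -
    have "vnorm xh = vnorm yh" unfolding xh_def using Unorm[OF yh] .
    moreover have "vnorm (xh - x) = vnorm (yh - y)" unfolding Ud[symmetric] using Unorm[OF yd] .
    ultimately show ?thesis by simp
  qed
  also have "\<dots> \<le> \<epsilon> * (2 / \<sigma> * (vnorm (h - s) + vnorm s)) + M * (2 / \<sigma> * (vnorm (h - s) + \<epsilon> * (vnorm s / \<sigma>)))"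
  proof -
    have "\<epsilon> * vnorm y \<le> \<epsilon> * (vnorm s / \<sigma>)" using ny eps by (rule mult_left_mono)
    hence "vnorm (yh - y) \<le> 2 / \<sigma> * (vnorm (h - s) + \<epsilon> * (vnorm s / \<sigma>))"
      using nd sig by (smt (verit) divide_pos_pos mult_left_mono)
    thus ?thesis using nyh eps M by (intro add_mono mult_left_mono) auto
  qed
  also have "\<dots> = (2 * (\<epsilon> + M) / \<sigma>) * vnorm (h - s) + (2 * \<epsilon> / \<sigma> + 2 * M * \<epsilon> / \<sigma>^2) * vnorm s"
    using sig by (simp add: field_simps power2_eq_square)
  finally show ?thesis .
qed

lemma fb_mult_vec: fixes A B C D :: "real mat"
  assumes A: "A \<in> carrier_mat n1 m1" and B: "B \<in> carrier_mat n1 m2"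
    and C: "C \<in> carrier_mat n2 m1" and D: "D \<in> carrier_mat n2 m2"
    and x1: "x1 \<in> carrier_vec m1" and x2: "x2 \<in> carrier_vec m2"
  shows "four_block_mat A B C D *\<^sub>v (x1 @\<^sub>v x2) = (A *\<^sub>v x1 + B *\<^sub>v x2) @\<^sub>v (C *\<^sub>v x1 + D *\<^sub>v x2)"
proof (rule eq_vecI)
  fix i assume "i < dim_vec ((A *\<^sub>v x1 + B *\<^sub>v x2) @\<^sub>v (C *\<^sub>v x1 + D *\<^sub>v x2))"
  hence i: "i < n1 + n2" using A B C D by simp
  show "(four_block_mat A B C D *\<^sub>v (x1 @\<^sub>v x2)) $ i = ((A *\<^sub>v x1 + B *\<^sub>v x2) @\<^sub>v (C *\<^sub>v x1 + D *\<^sub>v x2)) $ i"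
  proof (cases "i < n1")
    case True
    have "(four_block_mat A B C D *\<^sub>v (x1 @\<^sub>v x2)) $ i = (row A i @\<^sub>v row B i) \<bullet> (x1 @\<^sub>v x2)"
      using i A D row_four_block_mat(1)[OF A B C D True] by simp
    also have "\<dots> = row A i \<bullet> x1 + row B i \<bullet> x2"
      by (rule scalar_prod_append) (use A B x1 x2 True in auto)
    finally show ?thesis using True A B C D x1 x2 by simp
  next
    case False
    have "(four_block_mat A B C D *\<^sub>v (x1 @\<^sub>v x2)) $ i = (row C (i - n1) @\<^sub>v row D (i - n1)) \<bullet> (x1 @\<^sub>v x2)"
      using i A D row_four_block_mat(2)[OF A B C D False i] by simp
    also have "\<dots> = row C (i - n1) \<bullet> x1 + row D (i - n1) \<bullet> x2"
      by (rule scalar_prod_append) (use C D x1 x2 in auto)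
    finally show ?thesis using False i A B C D x1 x2 by simp
  qed
qed (use A B C D in simp)

lemma mult_zero_vec_r: fixes B :: "real mat" shows "B \<in> carrier_mat n m \<Longrightarrow> B *\<^sub>v 0\<^sub>v m = 0\<^sub>v n"
  by (intro eq_vecI) auto

lemma zero_append: "0\<^sub>v (n1 + n2) = (0\<^sub>v n1 :: real vec) @\<^sub>v 0\<^sub>v n2"
  by (intro eq_vecI) auto

lemma block_range:
  fixes A B C D U :: "real mat"
  assumes A: "A \<in> carrier_mat n1 m1" and B: "B \<in> carrier_mat n1 m2"
    and C: "C \<in> carrier_mat n2 m1" and D: "D \<in> carrier_mat n2 m2"
    and U: "U \<in> carrier_mat m1 p"
    and rk: "mat_rank (four_block_mat A B C D) \<le> p"
    and inj: "\<And>y. y \<in> carrier_vec p \<Longrightarrow> A *\<^sub>v (U *\<^sub>v y) = 0\<^sub>v n1 \<Longrightarrow> y = 0\<^sub>v p"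
    and j: "j < m2"
  shows "\<exists>y\<in>carrier_vec p. col B j = A *\<^sub>v (U *\<^sub>v y) \<and> col D j = C *\<^sub>v (U *\<^sub>v y)"
proof -
  define T where "T = four_block_mat A B C D"
  have T: "T \<in> carrier_mat (n1 + n2) (m1 + m2)" unfolding T_def using A D by simp
  have rk': "vec_space.rank (n1 + n2) T \<le> p" using rk A D unfolding mat_rank_def T_def by simp
  define X where "X = mat (m1 + m2) p (\<lambda>(i,j). if i < m1 then U $$ (i,j) else 0)"
  have X: "X \<in> carrier_mat (m1 + m2) p" unfolding X_def by simp
  have Xy: "X *\<^sub>v y = (U *\<^sub>v y) @\<^sub>v 0\<^sub>v m2" if y: "y \<in> carrier_vec p" for y
  proof (rule eq_vecI)
    fix i assume "i < dim_vec ((U *\<^sub>v y) @\<^sub>v 0\<^sub>v m2)"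
    hence i: "i < m1 + m2" using U by simp
    show "(X *\<^sub>v y) $ i = ((U *\<^sub>v y) @\<^sub>v 0\<^sub>v m2) $ i"
    proof (cases "i < m1")
      case True
      have "row X i = row U i" unfolding X_def using True U by (intro eq_vecI) auto
      thus ?thesis using True i X U by simp
    next
      case False
      have "row X i = 0\<^sub>v p" unfolding X_def using False i by (intro eq_vecI) auto
      thus ?thesis using False i X U y by simp
    qed
  qed (use X U in simp)
  have TXy: "(T * X) *\<^sub>v y = (A *\<^sub>v (U *\<^sub>v y)) @\<^sub>v (C *\<^sub>v (U *\<^sub>v y))" if y: "y \<in> carrier_vec p" for y
  proof -
    have "(T * X) *\<^sub>v y = T *\<^sub>v (X *\<^sub>v y)" using T X y by simp
    also have "\<dots> = (A *\<^sub>v (U *\<^sub>v y) + B *\<^sub>v 0\<^sub>v m2) @\<^sub>v (C *\<^sub>v (U *\<^sub>v y) + D *\<^sub>v 0\<^sub>v m2)"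
      unfolding Xy[OF y] T_def by (rule fb_mult_vec[OF A B C D]) (use U y in auto)
    also have "\<dots> = (A *\<^sub>v (U *\<^sub>v y)) @\<^sub>v (C *\<^sub>v (U *\<^sub>v y))"
      using A B C D U y by (simp add: mult_zero_vec_r)
    finally show ?thesis .
  qed
  have injT: "y = 0\<^sub>v p" if y: "y \<in> carrier_vec p" and h: "(T * X) *\<^sub>v y = 0\<^sub>v (n1 + n2)" for y
  proof -
    have "(A *\<^sub>v (U *\<^sub>v y)) @\<^sub>v (C *\<^sub>v (U *\<^sub>v y)) = 0\<^sub>v n1 @\<^sub>v 0\<^sub>v n2"
      using h unfolding TXy[OF y] zero_append .
    hence "A *\<^sub>v (U *\<^sub>v y) = 0\<^sub>v n1" using append_vec_eq[of "A *\<^sub>v (U *\<^sub>v y)" n1 "0\<^sub>v n1"] A U y by simp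
    thus ?thesis using inj y by blast
  qed
  define z :: "real vec" where "z = 0\<^sub>v m1 @\<^sub>v unit_vec m2 j"
  have z: "z \<in> carrier_vec (m1 + m2)" unfolding z_def by simp
  have Tz: "T *\<^sub>v z = col B j @\<^sub>v col D j"
  proof -
    have "T *\<^sub>v z = (A *\<^sub>v 0\<^sub>v m1 + B *\<^sub>v unit_vec m2 j) @\<^sub>v (C *\<^sub>v 0\<^sub>v m1 + D *\<^sub>v unit_vec m2 j)"
      unfolding z_def T_def by (rule fb_mult_vec[OF A B C D]) auto
    thus ?thesis using A B C D j by (simp add: mult_unit_col mult_zero_vec_r)
  qed
  obtain y where y: "y \<in> carrier_vec p" and eq: "T *\<^sub>v z = (T * X) *\<^sub>v y"
    using in_range[OF T rk' X injT z] by blast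
  have "col B j @\<^sub>v col D j = (A *\<^sub>v (U *\<^sub>v y)) @\<^sub>v (C *\<^sub>v (U *\<^sub>v y))" using eq Tz TXy[OF y] by simp
  moreover have c1: "col B j \<in> carrier_vec n1" using B by (simp add: carrier_vecI)
  moreover have c2: "A *\<^sub>v (U *\<^sub>v y) \<in> carrier_vec n1" using A U y by simp
  ultimately have "col B j = A *\<^sub>v (U *\<^sub>v y) \<and> col D j = C *\<^sub>v (U *\<^sub>v y)"
    using append_vec_eq[OF c1 c2] by simp
  thus ?thesis using y by blast
qed

lemma final_arith: fixes \<sigma> \<epsilon> M :: real
  assumes s: "\<sigma> > 0" and e: "0 \<le> \<epsilon>" "\<epsilon> \<le> \<sigma> / 2" and M: "\<sigma> \<le> M"
  shows "(2 * (\<epsilon> + M) / \<sigma>) * \<epsilon> + (2 * \<epsilon> / \<sigma> + 2 * M * \<epsilon> / \<sigma>^2) * M \<le> 8 * \<epsilon> * M^2 / \<sigma>^2"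
proof -
  have lhs: "(2 * (\<epsilon> + M) / \<sigma>) * \<epsilon> + (2 * \<epsilon> / \<sigma> + 2 * M * \<epsilon> / \<sigma>^2) * M
      = \<epsilon> * (2 * \<epsilon> * \<sigma> + 4 * M * \<sigma> + 2 * M^2) / \<sigma>^2"
  proof -
    have "\<sigma>^2 \<noteq> 0" using s by simp
    have "(2 * (\<epsilon> + M) / \<sigma>) * \<epsilon> = \<epsilon> * (2 * \<epsilon> * \<sigma> + 2 * M * \<sigma>) / \<sigma>^2"
      using s by (simp add: power2_eq_square divide_simps) (simp add: algebra_simps)
    moreover have "(2 * \<epsilon> / \<sigma> + 2 * M * \<epsilon> / \<sigma>^2) * M = \<epsilon> * (2 * M * \<sigma> + 2 * M^2) / \<sigma>^2"
      using s by (simp add: power2_eq_square divide_simps) (simp add: algebra_simps)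
    ultimately show ?thesis by (simp add: add_divide_distrib[symmetric] algebra_simps)
  qed
  have "2 * \<epsilon> * \<sigma> \<le> M^2"
  proof -
    have "2 * \<epsilon> * \<sigma> \<le> \<sigma> * \<sigma>" using e s by (simp add: mult_right_mono)
    also have "\<dots> \<le> M * M" using M s by (simp add: mult_mono)
    finally show ?thesis by (simp add: power2_eq_square)
  qed
  moreover have "4 * M * \<sigma> \<le> 4 * M^2" using M s by (simp add: power2_eq_square mult_left_mono)
  ultimately have "2 * \<epsilon> * \<sigma> + 4 * M * \<sigma> + 2 * M^2 \<le> 8 * M^2"
    using zero_le_power2[of M] by linarith
  hence "\<epsilon> * (2 * \<epsilon> * \<sigma> + 4 * M * \<sigma> + 2 * M^2) \<le> \<epsilon> * (8 * M^2)" using e by (simp add: mult_left_mono)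
  hence "\<epsilon> * (2 * \<epsilon> * \<sigma> + 4 * M * \<sigma> + 2 * M^2) / \<sigma>^2 \<le> \<epsilon> * (8 * M^2) / \<sigma>^2"
    using s by (simp add: divide_right_mono)
  thus ?thesis unfolding lhs by simp
qed

lemma col_minus: fixes A B :: "real mat"
  assumes "A \<in> carrier_mat n m" "B \<in> carrier_mat n m" "j < m"
  shows "col (A - B) j = col A j - col B j"
  using assms by (intro eq_vecI) auto

theorem mainTheorem3:
  fixes n1 n2 m1 m2 p :: nat and \<epsilon> M :: real
    and H11 H12 H21 H22 S11 S12 S21 S22 :: "real mat"
  assumes "H11 \<in> carrier_mat n1 m1" "H12 \<in> carrier_mat n1 m2"
      "H21 \<in> carrier_mat n2 m1" "H22 \<in> carrier_mat n2 m2"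
      "S11 \<in> carrier_mat n1 m1" "S12 \<in> carrier_mat n1 m2"
      "S21 \<in> carrier_mat n2 m1" "S22 \<in> carrier_mat n2 m2"
    and "mat_rank (four_block_mat H11 H12 H21 H22) \<le> p"
    and "mat_rank (four_block_mat S11 S12 S21 S22) = p"
    and "sigma p S11 > 0"
    and "frob_norm (H11 - S11) \<le> \<epsilon>" "frob_norm (H12 - S12) \<le> \<epsilon>"
        "frob_norm (H21 - S21) \<le> \<epsilon>"
    and "frob_norm S11 \<le> M" "frob_norm S12 \<le> M" "frob_norm S21 \<le> M"
    and "\<epsilon> \<le> sigma p S11 / 2"
  shows "frob_norm (H22 - S22) \<le> 8 * \<epsilon> * M^2 / (sigma p S11)^2"
proof -
  note H11 = assms(1) and H12 = assms(2) and H21 = assms(3) and H22 = assms(4)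
  note S11 = assms(5) and S12 = assms(6) and S21 = assms(7) and S22 = assms(8)
  note rkH = assms(9) and rkS = assms(10) and sp = assms(11)
  note f11 = assms(12) and f12 = assms(13) and f21 = assms(14)
  note M11 = assms(15) and M12 = assms(16) and M21 = assms(17) and epsle = assms(18)
  define \<sigma> where "\<sigma> = sigma p S11"
  have sig: "\<sigma> > 0" using sp unfolding \<sigma>_def .
  have eps: "\<epsilon> \<ge> 0" using f11 frob_norm_nonneg order_trans by blast
  have p1: "1 \<le> p" using sp unfolding sigma_def by (auto split: if_splits)
  obtain L where Lp: "length L = p" and Lsub: "mset L \<subseteq># proots (char_poly (transpose_mat S11 * S11))"
    and Lge: "\<forall>x\<in>set L. x \<ge> \<sigma>^2"
    using sigma_list[OF sp] unfolding \<sigma>_def by blast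
  have A: "transpose_mat S11 * S11 \<in> carrier_mat m1 m1" using S11 by simp
  have AT: "transpose_mat (transpose_mat S11 * S11) = transpose_mat S11 * S11"
    using transpose_mult[of "transpose_mat S11" m1 n1 S11 m1] S11 by simp
  obtain vs where oe: "orthoeig (transpose_mat S11 * S11) m1 L vs"
    using spectral_partial[OF A AT Lsub] by blast
  define U where "U = mat_of_cols m1 vs"
  have U: "U \<in> carrier_mat m1 p" unfolding U_def
    using oe Lp mat_of_cols_carrier(1)[of m1 vs] unfolding orthoeig_def by simp
  have Unorm: "vnorm (U *\<^sub>v y) = vnorm y" if "y \<in> carrier_vec p" for y
    unfolding U_def using orthoeig_U(1)[OF S11 oe Lge _, of y] sig that Lp by simp
  have Slow: "\<sigma> * vnorm y \<le> vnorm (S11 *\<^sub>v (U *\<^sub>v y))" if "y \<in> carrier_vec p" for y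
    unfolding U_def using orthoeig_U(2)[OF S11 oe Lge _, of y] sig that Lp by simp
  have Hlow: "\<sigma> / 2 * vnorm y \<le> vnorm (H11 *\<^sub>v (U *\<^sub>v y))" if y: "y \<in> carrier_vec p" for y
  proof -
    have x: "U *\<^sub>v y \<in> carrier_vec m1" using U y by simp
    have "S11 *\<^sub>v (U *\<^sub>v y) = H11 *\<^sub>v (U *\<^sub>v y) - (H11 *\<^sub>v (U *\<^sub>v y) - S11 *\<^sub>v (U *\<^sub>v y))"
      using H11 S11 x by (intro eq_vecI) auto
    hence "vnorm (S11 *\<^sub>v (U *\<^sub>v y)) \<le> vnorm (H11 *\<^sub>v (U *\<^sub>v y)) + vnorm (H11 *\<^sub>v (U *\<^sub>v y) - S11 *\<^sub>v (U *\<^sub>v y))"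
      using vnorm_minus[of "H11 *\<^sub>v (U *\<^sub>v y)" n1 "H11 *\<^sub>v (U *\<^sub>v y) - S11 *\<^sub>v (U *\<^sub>v y)"] H11 S11 x by simp
    also have "vnorm (H11 *\<^sub>v (U *\<^sub>v y) - S11 *\<^sub>v (U *\<^sub>v y)) \<le> \<epsilon> * vnorm (U *\<^sub>v y)"
      by (rule vnorm_mat_diff[OF H11 S11 x f11])
    finally have "\<sigma> * vnorm y \<le> vnorm (H11 *\<^sub>v (U *\<^sub>v y)) + \<epsilon> * vnorm y"
      using Slow[OF y] Unorm[OF y] by simp
    moreover have "\<epsilon> * vnorm y \<le> \<sigma> / 2 * vnorm y"
      using mult_right_mono[OF epsle vnorm_nonneg[of y]] unfolding \<sigma>_def .
    ultimately show ?thesis by simp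
  qed
  have vz: "y = 0\<^sub>v p" if y: "y \<in> carrier_vec p" and "vnorm y \<le> 0" for y
  proof -
    have "vnorm y = 0" using that vnorm_nonneg[of y] by simp
    hence "y \<bullet> y = 0" using vnorm_sq[of y] by simp
    thus ?thesis using sprod_self_eq_0[of y] y by simp
  qed
  have injS: "y = 0\<^sub>v p" if y: "y \<in> carrier_vec p" and "S11 *\<^sub>v (U *\<^sub>v y) = 0\<^sub>v n1" for y
  proof -
    have "vnorm (0\<^sub>v n1) = 0" unfolding vnorm_def by simp
    hence "\<sigma> * vnorm y \<le> 0" using Slow[OF y] that by simp
    hence "vnorm y \<le> 0" using sig by (simp add: mult_le_0_iff vnorm_nonneg)
    thus ?thesis using vz y by blast
  qed
  have injH: "y = 0\<^sub>v p" if y: "y \<in> carrier_vec p" and "H11 *\<^sub>v (U *\<^sub>v y) = 0\<^sub>v n1" for y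
  proof -
    have "vnorm (0\<^sub>v n1) = 0" unfolding vnorm_def by simp
    hence "\<sigma> / 2 * vnorm y \<le> 0" using Hlow[OF y] that by simp
    hence "vnorm y \<le> 0" using sig by (simp add: mult_le_0_iff vnorm_nonneg)
    thus ?thesis using vz y by blast
  qed
  have rkS': "mat_rank (four_block_mat S11 S12 S21 S22) \<le> p" using rkS by simp
  have exS: "\<forall>j\<in>{..<m2}. \<exists>y. y \<in> carrier_vec p \<and> col S12 j = S11 *\<^sub>v (U *\<^sub>v y) \<and> col S22 j = S21 *\<^sub>v (U *\<^sub>v y)"
  proof
    fix j assume "j \<in> {..<m2}"
    hence j: "j < m2" by simp
    show "\<exists>y. y \<in> carrier_vec p \<and> col S12 j = S11 *\<^sub>v (U *\<^sub>v y) \<and> col S22 j = S21 *\<^sub>v (U *\<^sub>v y)"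
      using block_range[OF S11 S12 S21 S22 U rkS' injS j] by blast
  qed
  obtain ys where ys0: "\<forall>j\<in>{..<m2}. ys j \<in> carrier_vec p \<and> col S12 j = S11 *\<^sub>v (U *\<^sub>v ys j)
      \<and> col S22 j = S21 *\<^sub>v (U *\<^sub>v ys j)" using bchoice[OF exS] by blast
  have ys: "ys j \<in> carrier_vec p" "S11 *\<^sub>v (U *\<^sub>v ys j) = col S12 j" "S21 *\<^sub>v (U *\<^sub>v ys j) = col S22 j"
    if "j < m2" for j using ys0 that by auto
  have exH: "\<forall>j\<in>{..<m2}. \<exists>y. y \<in> carrier_vec p \<and> col H12 j = H11 *\<^sub>v (U *\<^sub>v y) \<and> col H22 j = H21 *\<^sub>v (U *\<^sub>v y)"
  proof
    fix j assume "j \<in> {..<m2}"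
    hence j: "j < m2" by simp
    show "\<exists>y. y \<in> carrier_vec p \<and> col H12 j = H11 *\<^sub>v (U *\<^sub>v y) \<and> col H22 j = H21 *\<^sub>v (U *\<^sub>v y)"
      using block_range[OF H11 H12 H21 H22 U rkH injH j] by blast
  qed
  obtain yh where yh0: "\<forall>j\<in>{..<m2}. yh j \<in> carrier_vec p \<and> col H12 j = H11 *\<^sub>v (U *\<^sub>v yh j)
      \<and> col H22 j = H21 *\<^sub>v (U *\<^sub>v yh j)" using bchoice[OF exH] by blast
  have yh: "yh j \<in> carrier_vec p" "H11 *\<^sub>v (U *\<^sub>v yh j) = col H12 j" "H21 *\<^sub>v (U *\<^sub>v yh j) = col H22 j"
    if "j < m2" for j using yh0 that by auto
  have Msig: "\<sigma> \<le> M"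
  proof -
    define y0 :: "real vec" where "y0 = unit_vec p 0"
    have y0: "y0 \<in> carrier_vec p" unfolding y0_def by simp
    have ny0: "vnorm y0 = 1" unfolding y0_def vnorm_def using p1 by simp
    have "\<sigma> \<le> vnorm (S11 *\<^sub>v (U *\<^sub>v y0))" using Slow[OF y0] ny0 by simp
    also have "\<dots> \<le> M * vnorm (U *\<^sub>v y0)" by (rule vnorm_mat_le[OF S11 _ M11]) (use U y0 in simp)
    also have "\<dots> = M" using Unorm[OF y0] ny0 by simp
    finally show ?thesis .
  qed
  define a where "a = (\<lambda>j. vnorm (col (H12 - S12) j))"
  define s where "s = (\<lambda>j. vnorm (col S12 j))"
  define d where "d = (\<lambda>j. vnorm (col (H22 - S22) j))"
  define \<alpha> where "\<alpha> = 2 * (\<epsilon> + M) / \<sigma>"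
  define \<beta> where "\<beta> = 2 * \<epsilon> / \<sigma> + 2 * M * \<epsilon> / \<sigma>^2"
  have Mnn: "M \<ge> 0" using Msig sig by simp
  have ab: "\<alpha> \<ge> 0" "\<beta> \<ge> 0" unfolding \<alpha>_def \<beta>_def using eps Mnn sig by auto
  have dj: "d j \<le> \<alpha> * a j + \<beta> * s j" if j: "j < m2" for j
  proof -
    have "vnorm (col H22 j - col S22 j) \<le> \<alpha> * vnorm (col H12 j - col S12 j) + \<beta> * vnorm (col S12 j)"
      unfolding \<alpha>_def \<beta>_def
      by (rule column_bound[OF H11 S11 H21 S21 U ys(1)[OF j] yh(1)[OF j] Unorm Slow Hlow
            ys(2)[OF j] yh(2)[OF j] ys(3)[OF j] yh(3)[OF j] f11 f21 M21 sig])
    thus ?thesis unfolding a_def s_def d_def using col_minus H12 S12 H22 S22 j by simp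
  qed
  have fro: "frob_norm A = L2_set (\<lambda>j. vnorm (col A j)) {..<m}" if "A \<in> carrier_mat n m" for A :: "real mat" and n m
    unfolding frob_norm_cols[OF that] L2_set_def by simp
  have "frob_norm (H22 - S22) = L2_set d {..<m2}" unfolding d_def by (rule fro) (rule minus_carrier_mat[OF S22])
  also have "\<dots> \<le> L2_set (\<lambda>j. \<alpha> * a j + \<beta> * s j) {..<m2}"
    by (rule L2_set_mono) (use dj in \<open>auto simp: d_def vnorm_nonneg\<close>)
  also have "\<dots> \<le> L2_set (\<lambda>j. \<alpha> * a j) {..<m2} + L2_set (\<lambda>j. \<beta> * s j) {..<m2}"
    by (rule L2_set_triangle_ineq)
  also have "\<dots> = \<alpha> * L2_set a {..<m2} + \<beta> * L2_set s {..<m2}"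
    using ab by (simp add: L2_set_right_distrib)
  also have "\<dots> \<le> \<alpha> * \<epsilon> + \<beta> * M"
  proof -
    have "L2_set a {..<m2} = frob_norm (H12 - S12)" unfolding a_def by (rule fro[symmetric]) (rule minus_carrier_mat[OF S12])
    moreover have "L2_set s {..<m2} = frob_norm S12" unfolding s_def using S12 by (intro fro[symmetric])
    ultimately show ?thesis using f12 M12 ab by (intro add_mono mult_left_mono) auto
  qed
  also have "\<dots> \<le> 8 * \<epsilon> * M^2 / \<sigma>^2" unfolding \<alpha>_def \<beta>_def
    by (rule final_arith[OF sig eps _ Msig]) (use epsle \<sigma>_def in simp)
  finally show ?thesis unfolding \<sigma>_def .
qed

end
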